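(* Let $x,y,z$ be fixed roots of unity different from $1$. Let $\mathcal{E}^*\in\overline{\mathbb{Q}}[a,b,c,d]$ be the polynomial obtained from \[\mathcal{E}=B_2^2-A_1B_1B_2+(A_1^2-2A_2)B_2+A_2B_1^2-A_1A_2B_1+A_2^2\] by substituting \[A_1=\tfrac{y-x}{y-1}a+\tfrac{xy-1}{y-1}b,\quad A_2=xab,\quad B_1=\tfrac{z-x}{z-1}c+\tfrac{xz-1}{z-1}d,\quad B_2=xcd.\] Then $\mathcal{E}^*$ is irreducible in $\overline{\mathbb{Q}}[a,b,c,d]$, unless $x=y=z=-1$.
   Context: $a,b,c,d$ are independent variables. (For $x=y=z=-1$ one has $\mathcal{E}^*=(ab-cd)^2$.) *)

theory Defs
  imports Complex_Main "HOL-Computational_Algebra.Polynomial"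
begin

text \<open>Polynomials in four variables a, b, c, d over the complex numbers, represented as
  nested univariate polynomials: innermost variable a, then b, then c, outermost d.
  The ring Qbar[a,b,c,d] is the subring of those with all coefficients algebraic.\<close>

type_synonym mpoly4 = "complex poly poly poly poly"

definition const4 :: "complex \<Rightarrow> mpoly4" where
  "const4 r = [:[:[:[:r:]:]:]:]"

definition var_a :: mpoly4 where
  "var_a = [:[:[:[:0, 1:]:]:]:]"

definition var_b :: mpoly4 where
  "var_b = [:[:[:0, 1:]:]:]"

definition var_c :: mpoly4 where
  "var_c = [:[:0, 1:]:]"

definition var_d :: mpoly4 where
  "var_d = [:0, 1:]"

definition alg_coeffs4 :: "mpoly4 \<Rightarrow> bool" where
  "alg_coeffs4 p \<longleftrightarrow>
     (\<forall>i j k l. algebraic (coeff (coeff (coeff (coeff p i) j) k) l))"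

definition unit_Qbar4 :: "mpoly4 \<Rightarrow> bool" where
  "unit_Qbar4 f \<longleftrightarrow> (\<exists>h. alg_coeffs4 h \<and> f * h = 1)"

definition irreducible_Qbar4 :: "mpoly4 \<Rightarrow> bool" where
  "irreducible_Qbar4 p \<longleftrightarrow>
     alg_coeffs4 p \<and> p \<noteq> 0 \<and> \<not> unit_Qbar4 p \<and>
     (\<forall>f g. alg_coeffs4 f \<and> alg_coeffs4 g \<and> p = f * g \<longrightarrow> unit_Qbar4 f \<or> unit_Qbar4 g)"

definition root_of_unity :: "complex \<Rightarrow> bool" where
  "root_of_unity x \<longleftrightarrow> (\<exists>n::nat. n > 0 \<and> x ^ n = 1)"

definition E_poly :: "mpoly4 \<Rightarrow> mpoly4 \<Rightarrow> mpoly4 \<Rightarrow> mpoly4 \<Rightarrow> mpoly4" where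
  "E_poly A1 A2 B1 B2 =
     B2^2 - A1 * B1 * B2 + (A1^2 - 2 * A2) * B2 + A2 * B1^2 - A1 * A2 * B1 + A2^2"

definition E_star :: "complex \<Rightarrow> complex \<Rightarrow> complex \<Rightarrow> mpoly4" where
  "E_star x y z =
     E_poly
       (const4 ((y - x) / (y - 1)) * var_a + const4 ((x * y - 1) / (y - 1)) * var_b)
       (const4 x * var_a * var_b)
       (const4 ((z - x) / (z - 1)) * var_c + const4 ((x * z - 1) / (z - 1)) * var_d)
       (const4 x * var_c * var_d)"

end

theory Submission imports Defs "HOL-Computational_Algebra.Polynomial_Factorial" "HOL-Computational_Algebra.Field_as_Ring" begin


interpretation Q: vector_space "\<lambda>(r::rat) (w::complex). of_rat r * w"
  by unfold_locales (simp_all add: algebra_simps of_rat_add of_rat_mult)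

lemma span_mult_closed:
  assumes GG: "\<And>g h. g \<in> G \<Longrightarrow> h \<in> G \<Longrightarrow> g * h \<in> Q.span G"
    and u: "u \<in> Q.span G" and v: "v \<in> Q.span G"
  shows "u * v \<in> Q.span G"
proof -
  have 1: "g * v \<in> Q.span G" if g: "g \<in> G" for g
  proof -
    have "(\<lambda>v. g * v \<in> Q.span G) v"
    proof (rule Q.span_induct[OF v])
      show "Q.subspace (Collect (\<lambda>v. g * v \<in> Q.span G))"
        unfolding Q.subspace_def
        by (auto simp: distrib_left Q.span_add Q.span_zero intro: Q.span_scale[of _ G, simplified mult.left_commute])
          (metis Q.span_scale mult.left_commute)
      show "\<And>h. h \<in> G \<Longrightarrow> g * h \<in> Q.span G" using GG g by blast
    qed
    then show ?thesis by simp
  qed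
  have "(\<lambda>u. u * v \<in> Q.span G) u"
  proof (rule Q.span_induct[OF u])
    show "Q.subspace (Collect (\<lambda>u. u * v \<in> Q.span G))"
      unfolding Q.subspace_def
      by (auto simp: distrib_right Q.span_add Q.span_zero) (metis Q.span_scale mult.assoc)
    show "\<And>g. g \<in> G \<Longrightarrow> g * v \<in> Q.span G" using 1 by blast
  qed
  then show ?thesis by simp
qed

lemma span_power_closed:
  assumes GG: "\<And>g h. g \<in> G \<Longrightarrow> h \<in> G \<Longrightarrow> g * h \<in> Q.span G" and one: "1 \<in> G"
    and u: "u \<in> Q.span G"
  shows "u ^ k \<in> Q.span G"
  by (induct k) (auto intro: Q.span_base one span_mult_closed[OF GG u])

lemma algebraic_of_span:
  assumes fin: "finite G" and GG: "\<And>g h. g \<in> G \<Longrightarrow> h \<in> G \<Longrightarrow> g * h \<in> Q.span G" and one: "1 \<in> G"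
    and w: "w \<in> Q.span G"
  shows "algebraic w"
proof (cases "inj_on (\<lambda>k. w ^ k) {..card G}")
  case False
  then obtain i j where ij: "i \<noteq> j" "w ^ i = w ^ j" unfolding inj_on_def by blast
  define P :: "complex poly" where "P = monom 1 i - monom 1 j"
  have "P \<noteq> 0" using ij(1) unfolding P_def by (metis coeff_monom diff_zero one_neq_zero right_minus_eq)
  moreover have "\<forall>n. coeff P n \<in> \<int>" unfolding P_def by (auto simp: coeff_monom)
  moreover have "poly P w = 0" unfolding P_def using ij by (simp add: poly_monom)
  ultimately show ?thesis by (intro algebraicI[of P]) auto
next
  case True
  define W where "W = (\<lambda>k. w ^ k) ` {..card G}"
  have cW: "card W = Suc (card G)" unfolding W_def using card_image[OF True] by simp
  have WG: "W \<subseteq> Q.span G" unfolding W_def using span_power_closed[OF GG one w] by auto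
  have "Q.dependent W"
  proof (rule ccontr)
    assume "\<not> Q.dependent W"
    then have "card W \<le> card G" using Q.independent_span_bound[OF fin _ WG] by blast
    with cW show False by simp
  qed
  then have "\<exists>t u. finite t \<and> t \<subseteq> W \<and> (\<Sum>v\<in>t. of_rat (u v) * v) = 0 \<and> (\<exists>v\<in>t. u v \<noteq> 0)"
    by (simp add: Q.dependent_explicit)
  then obtain t u v0 where t: "finite t" "t \<subseteq> W" "(\<Sum>v\<in>t. of_rat (u v) * v) = 0" and v0: "v0 \<in> t" "u v0 \<noteq> 0"
    by blast
  define kk where "kk v = (SOME k. k \<le> card G \<and> v = w ^ k)" for v
  have kk: "kk v \<le> card G \<and> v = w ^ kk v" if "v \<in> t" for v
  proof -
    have "\<exists>k. k \<le> card G \<and> v = w ^ k" using that t(2) unfolding W_def by auto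
    then show ?thesis unfolding kk_def by (rule someI_ex)
  qed
  have kinj: "inj_on kk t"
  proof (rule inj_onI)
    fix a b assume "a \<in> t" "b \<in> t" "kk a = kk b"
    then show "a = b" using kk[of a] kk[of b] by simp
  qed
  define P :: "complex poly" where "P = (\<Sum>v\<in>t. monom (of_rat (u v)) (kk v))"
  have cP: "coeff P n = (\<Sum>v\<in>t. if kk v = n then of_rat (u v) else 0)" for n
    unfolding P_def by (simp add: coeff_sum coeff_monom)
  have cP2: "coeff P (kk v) = of_rat (u v)" if "v \<in> t" for v
  proof -
    have "(\<Sum>v'\<in>t. if kk v' = kk v then of_rat (u v') else 0) = (\<Sum>v'\<in>t. if v' = v then of_rat (u v') else (0::complex))"
      by (rule sum.cong) (use kinj that in \<open>auto simp: inj_on_def\<close>)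
    then show ?thesis using cP t(1) that by simp
  qed
  have "P \<noteq> 0" using cP2[OF v0(1)] v0(2) by auto
  moreover have "\<forall>n. coeff P n \<in> \<rat>" unfolding cP by (auto intro!: Rats_sum)
  moreover have "poly P w = 0"
  proof -
    have "poly P w = (\<Sum>v\<in>t. of_rat (u v) * w ^ kk v)" unfolding P_def by (simp add: poly_sum poly_monom)
    also have "\<dots> = (\<Sum>v\<in>t. of_rat (u v) * v)" by (rule sum.cong) (use kk in auto)
    finally show ?thesis using t(3) by simp
  qed
  ultimately show ?thesis by (intro algebraicI'[of P]) auto
qed

definition subr :: "'a::comm_ring_1 set \<Rightarrow> bool" where
  "subr V \<longleftrightarrow> 1 \<in> V \<and> (\<forall>a\<in>V. \<forall>b\<in>V. a + b \<in> V \<and> a * b \<in> V \<and> a - b \<in> V)"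

lemma subr_one: "subr V \<Longrightarrow> 1 \<in> V" by (simp add: subr_def)
lemma subr_add: "subr V \<Longrightarrow> a \<in> V \<Longrightarrow> b \<in> V \<Longrightarrow> a + b \<in> V" by (simp add: subr_def)
lemma subr_mult: "subr V \<Longrightarrow> a \<in> V \<Longrightarrow> b \<in> V \<Longrightarrow> a * b \<in> V" by (simp add: subr_def)
lemma subr_diff: "subr V \<Longrightarrow> a \<in> V \<Longrightarrow> b \<in> V \<Longrightarrow> a - b \<in> V" by (simp add: subr_def)
lemma subr_zero: "subr V \<Longrightarrow> 0 \<in> V" using subr_diff[of V 1 1] subr_one[of V] by simp
lemma subr_minus: "subr V \<Longrightarrow> a \<in> V \<Longrightarrow> - a \<in> V" using subr_diff[of V 0 a] subr_zero[of V] by simp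
lemma subr_power: "subr V \<Longrightarrow> a \<in> V \<Longrightarrow> a ^ n \<in> V"
  by (induct n) (auto intro: subr_one subr_mult)
lemma subr_of_nat: "subr V \<Longrightarrow> of_nat n \<in> V"
  by (induct n) (auto intro: subr_zero subr_one subr_add)
lemma subr_numeral: "subr V \<Longrightarrow> numeral n \<in> V"
  using subr_of_nat[of V "numeral n"] by simp
lemma subr_sum: "subr V \<Longrightarrow> (\<And>i. i \<in> A \<Longrightarrow> f i \<in> V) \<Longrightarrow> sum f A \<in> V"
proof (induct A rule: infinite_finite_induct)
  case (infinite A) then show ?case by (simp add: subr_zero)
next
  case empty then show ?case by (simp add: subr_zero)
next
  case (insert a A) then show ?case by (simp add: subr_add)
qed

definition polysin :: "'a::comm_ring_1 set \<Rightarrow> 'a poly set" where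
  "polysin V = {p. \<forall>i. coeff p i \<in> V}"

lemma subr_polysin: assumes V: "subr V" shows "subr (polysin V)"
  unfolding subr_def polysin_def
proof (intro conjI ballI CollectI allI)
  fix i show "coeff 1 i \<in> V" using V by (simp add: coeff_1 subr_one subr_zero)
next
  fix a b i assume a: "a \<in> {p. \<forall>i. coeff p i \<in> V}" and b: "b \<in> {p. \<forall>i. coeff p i \<in> V}"
  show "coeff (a + b) i \<in> V" using a b V by (simp add: subr_add)
  show "coeff (a - b) i \<in> V" using a b V by (simp add: subr_diff)
  show "coeff (a * b) i \<in> V" using a b V unfolding coeff_mult by (auto intro!: subr_sum subr_mult)
qed

lemma polysin_const: "subr V \<Longrightarrow> v \<in> V \<Longrightarrow> [:v:] \<in> polysin V"
  by (auto simp: polysin_def coeff_pCons subr_zero split: nat.split)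
lemma polysin_X: "subr V \<Longrightarrow> [:0, 1:] \<in> polysin V"
  by (auto simp: polysin_def coeff_pCons subr_zero subr_one split: nat.split)

definition V4 :: "complex set \<Rightarrow> complex poly poly poly poly set" where
  "V4 V = polysin (polysin (polysin (polysin V)))"

lemma subr_V4: "subr V \<Longrightarrow> subr (V4 V)" unfolding V4_def by (intro subr_polysin)

lemma V4_alg: "p \<in> V4 V \<Longrightarrow> V \<subseteq> {w. algebraic w} \<Longrightarrow> alg_coeffs4 p"
  unfolding V4_def polysin_def alg_coeffs4_def by blast

lemma const4_V4: "subr V \<Longrightarrow> v \<in> V \<Longrightarrow> const4 v \<in> V4 V"
  unfolding const4_def V4_def by (intro polysin_const subr_polysin)
lemma vars_V4: "subr V \<Longrightarrow> var_a \<in> V4 V" "subr V \<Longrightarrow> var_b \<in> V4 V" "subr V \<Longrightarrow> var_c \<in> V4 V" "subr V \<Longrightarrow> var_d \<in> V4 V"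
  unfolding var_a_def var_b_def var_c_def var_d_def V4_def by (intro polysin_const polysin_X subr_polysin; assumption)+

lemma E_poly_in:
  assumes W: "subr W" and h: "a1 \<in> W" "a2 \<in> W" "b1 \<in> W" "b2 \<in> W"
  shows "E_poly a1 a2 b1 b2 \<in> W"
proof -
  have t2: "2 \<in> W" using subr_numeral[OF W] .
  have f: "b2^2 \<in> W" "a1 * b1 * b2 \<in> W" "a1^2 - 2 * a2 \<in> W" "a2 * b1^2 \<in> W" "a1 * a2 * b1 \<in> W" "a2^2 \<in> W"
    using W h t2 by (simp_all add: subr_power subr_mult subr_diff)
  have g1: "b2^2 - a1 * b1 * b2 \<in> W" using subr_diff[OF W f(1) f(2)] .
  have g2: "(a1^2 - 2 * a2) * b2 \<in> W" using subr_mult[OF W f(3) h(4)] .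
  have g3: "b2^2 - a1 * b1 * b2 + (a1^2 - 2 * a2) * b2 \<in> W" using subr_add[OF W g1 g2] .
  have g4: "b2^2 - a1 * b1 * b2 + (a1^2 - 2 * a2) * b2 + a2 * b1^2 \<in> W" using subr_add[OF W g3 f(4)] .
  have g5: "b2^2 - a1 * b1 * b2 + (a1^2 - 2 * a2) * b2 + a2 * b1^2 - a1 * a2 * b1 \<in> W" using subr_diff[OF W g4 f(5)] .
  show ?thesis unfolding E_poly_def using subr_add[OF W g5 f(6)] .
qed

lemma E_star_V4:
  assumes V: "subr V" and "x \<in> V" "(y - x) / (y - 1) \<in> V" "(x * y - 1) / (y - 1) \<in> V"
     "(z - x) / (z - 1) \<in> V" "(x * z - 1) / (z - 1) \<in> V"
  shows "E_star x y z \<in> V4 V"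
proof -
  have W: "subr (V4 V)" using subr_V4[OF V] .
  have a1: "const4 ((y - x) / (y - 1)) * var_a + const4 ((x * y - 1) / (y - 1)) * var_b \<in> V4 V"
    using W V assms(3,4) by (metis subr_add subr_mult const4_V4 vars_V4)
  have a2: "const4 x * var_a * var_b \<in> V4 V"
    using W V assms(2) by (metis subr_mult const4_V4 vars_V4)
  have b1: "const4 ((z - x) / (z - 1)) * var_c + const4 ((x * z - 1) / (z - 1)) * var_d \<in> V4 V"
    using W V assms(5,6) by (metis subr_add subr_mult const4_V4 vars_V4)
  have b2: "const4 x * var_c * var_d \<in> V4 V"
    using W V assms(2) by (metis subr_mult const4_V4 vars_V4)
  show ?thesis
    unfolding E_star_def using E_poly_in[OF W a1 a2 b1 b2] .
qed

lemma pow_mod_eq: "(x::'a::monoid_mult) ^ n = 1 \<Longrightarrow> x ^ m = x ^ (m mod n)"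
proof -
  assume h: "x ^ n = 1"
  have "x ^ m = x ^ (n * (m div n) + m mod n)" by simp
  also have "\<dots> = (x ^ n) ^ (m div n) * x ^ (m mod n)" by (simp only: power_add power_mult)
  finally show ?thesis using h by simp
qed

lemma inv_sum: fixes y :: complex
  shows "(y - 1)^2 * (\<Sum>k<n. of_nat k * y ^ k) = (of_nat n - 1) * y ^ (n + 1) - of_nat n * y ^ n + y"
proof (induct n)
  case 0 then show ?case by (simp add: power2_eq_square)
next
  case (Suc n)
  have "(y - 1)^2 * (\<Sum>k<Suc n. of_nat k * y ^ k) = (y - 1)^2 * (\<Sum>k<n. of_nat k * y ^ k) + (y-1)^2 * (of_nat n * y ^ n)"
    by (simp add: algebra_simps)
  also have "\<dots> = (of_nat n - 1) * y ^ (n + 1) - of_nat n * y ^ n + y + (y-1)^2 * (of_nat n * y ^ n)"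
    using Suc by simp
  also have "\<dots> = (of_nat (Suc n) - 1) * y ^ (Suc n + 1) - of_nat (Suc n) * y ^ Suc n + y"
    by (simp add: algebra_simps power2_eq_square)
  finally show ?case .
qed
lemma inv_root: fixes y :: complex
  assumes "y ^ n = 1" "n > 0" "y \<noteq> 1"
  shows "inverse (y - 1) = (\<Sum>k<n. of_rat (of_nat k / of_nat n) * y ^ k)"
proof -
  have y1: "y - 1 \<noteq> 0" using assms(3) by simp
  have "y ^ (n+1) = y" using assms(1) by simp
  then have "(y - 1)^2 * (\<Sum>k<n. of_nat k * y ^ k) = (of_nat n - 1) * y - of_nat n + y"
    using inv_sum[of y n] assms(1) by simp
  also have "\<dots> = (y - 1) * of_nat n" by (simp add: algebra_simps)
  finally have "(y - 1) * ((y - 1) * (\<Sum>k<n. of_nat k * y ^ k)) = (y - 1) * of_nat n"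
    by (simp add: power2_eq_square mult.assoc)
  then have e: "(y - 1) * (\<Sum>k<n. of_nat k * y ^ k) = of_nat n" using y1 by simp
  have nz: "(of_nat n :: complex) \<noteq> 0" using assms(2) by simp
  have "inverse (y - 1) = (\<Sum>k<n. of_nat k * y ^ k) / of_nat n"
    using e y1 nz by (simp add: field_simps)
  also have "\<dots> = (\<Sum>k<n. of_rat (of_nat k / of_nat n) * y ^ k)"
    by (simp add: sum_divide_distrib of_rat_divide)
  finally show ?thesis .
qed
definition GG :: "complex \<Rightarrow> complex \<Rightarrow> complex \<Rightarrow> nat \<Rightarrow> nat \<Rightarrow> nat \<Rightarrow> complex set" where
  "GG x y z n1 n2 n3 = (\<lambda>(i,j,k). x^i * y^j * z^k) ` ({..<n1} \<times> {..<n2} \<times> {..<n3})"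

lemma GG_finite: "finite (GG x y z n1 n2 n3)" unfolding GG_def by simp

lemma GG_mono:
  assumes "x^n1 = 1" "y^n2 = 1" "z^n3 = 1" "n1 > 0" "n2 > 0" "n3 > 0"
  shows "x^i * y^j * z^k \<in> GG x y z n1 n2 n3"
proof -
  have "x^i * y^j * z^k = x^(i mod n1) * y^(j mod n2) * z^(k mod n3)"
    using pow_mod_eq[OF assms(1)] pow_mod_eq[OF assms(2)] pow_mod_eq[OF assms(3)] by metis
  moreover have "(i mod n1, j mod n2, k mod n3) \<in> {..<n1} \<times> {..<n2} \<times> {..<n3}" using assms by simp
  ultimately show ?thesis unfolding GG_def by (auto intro!: image_eqI[where x="(i mod n1, j mod n2, k mod n3)"])
qed

lemma span_subr:
  assumes "x^n1 = 1" "y^n2 = 1" "z^n3 = 1" "n1 > 0" "n2 > 0" "n3 > 0"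
  shows "subr (Q.span (GG x y z n1 n2 n3))"
proof -
  let ?G = "GG x y z n1 n2 n3"
  have GGm: "g * h \<in> Q.span ?G" if gG: "g \<in> ?G" and hG: "h \<in> ?G" for g h
  proof -
    obtain i j k where g: "g = x^i * y^j * z^k" using gG by (force simp: GG_def)
    obtain i' j' k' where h: "h = x^i' * y^j' * z^k'" using hG by (force simp: GG_def)
    have "g * h = x^(i+i') * y^(j+j') * z^(k+k')" unfolding g h by (simp add: power_add algebra_simps)
    moreover have "x^(i+i') * y^(j+j') * z^(k+k') \<in> ?G" by (rule GG_mono[OF assms])
    ultimately show ?thesis using Q.span_base by simp
  qed
  have one: "1 \<in> ?G" using GG_mono[OF assms, of 0 0 0] by simp
  show ?thesis unfolding subr_def
  proof (intro conjI ballI)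
    show "1 \<in> Q.span ?G" using Q.span_base[OF one] .
    fix a b assume a: "a \<in> Q.span ?G" and b: "b \<in> Q.span ?G"
    show "a + b \<in> Q.span ?G" using Q.span_add[OF a b] .
    show "a - b \<in> Q.span ?G" using Q.span_diff[OF a b] .
    show "a * b \<in> Q.span ?G" using span_mult_closed[OF GGm a b] .
  qed
qed

lemma alg_E: assumes "root_of_unity x" "root_of_unity y" "root_of_unity z" "y \<noteq> 1" "z \<noteq> 1"
  shows "alg_coeffs4 (E_star x y z)"
proof -
  obtain n1 where n1: "n1 > 0" "x ^ n1 = 1" using assms(1) unfolding root_of_unity_def by blast
  obtain n2 where n2: "n2 > 0" "y ^ n2 = 1" using assms(2) unfolding root_of_unity_def by blast
  obtain n3 where n3: "n3 > 0" "z ^ n3 = 1" using assms(3) unfolding root_of_unity_def by blast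
  define G where "G = GG x y z n1 n2 n3"
  define V where "V = Q.span G"
  have A: "x^n1 = 1" "y^n2 = 1" "z^n3 = 1" "n1 > 0" "n2 > 0" "n3 > 0" using n1 n2 n3 by auto
  have sV: "subr V" unfolding V_def G_def using span_subr[OF A] .
  have mono: "x^i * y^j * z^k \<in> V" for i j k unfolding V_def G_def using GG_mono[OF A] Q.span_base by blast
  have xV: "x \<in> V" using mono[of 1 0 0] by simp
  have yV: "y \<in> V" using mono[of 0 1 0] by simp
  have zV: "z \<in> V" using mono[of 0 0 1] by simp
  have yi: "inverse (y - 1) \<in> V"
  proof -
    have "inverse (y - 1) = (\<Sum>k<n2. of_rat (of_nat k / of_nat n2) * y ^ k)"
      using inv_root[OF n2(2) n2(1) assms(4)] .
    moreover have "(\<Sum>k<n2. of_rat (of_nat k / of_nat n2) * y ^ k) \<in> V"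
      unfolding V_def by (intro Q.span_sum Q.span_scale) (use mono[of 0 _ 0] in \<open>simp add: V_def\<close>)
    ultimately show ?thesis by simp
  qed
  have zi: "inverse (z - 1) \<in> V"
  proof -
    have "inverse (z - 1) = (\<Sum>k<n3. of_rat (of_nat k / of_nat n3) * z ^ k)"
      using inv_root[OF n3(2) n3(1) assms(5)] .
    moreover have "(\<Sum>k<n3. of_rat (of_nat k / of_nat n3) * z ^ k) \<in> V"
      unfolding V_def by (intro Q.span_sum Q.span_scale) (use mono[of 0 0 _] in \<open>simp add: V_def\<close>)
    ultimately show ?thesis by simp
  qed
  have one: "1 \<in> V" using subr_one[OF sV] .
  have c1: "(y - x) / (y - 1) \<in> V" unfolding divide_inverse by (intro subr_mult[OF sV] subr_diff[OF sV] yV xV yi)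
  have c2: "(x * y - 1) / (y - 1) \<in> V" unfolding divide_inverse by (intro subr_mult[OF sV] subr_diff[OF sV] yV xV yi one)
  have c3: "(z - x) / (z - 1) \<in> V" unfolding divide_inverse by (intro subr_mult[OF sV] subr_diff[OF sV] zV xV zi)
  have c4: "(x * z - 1) / (z - 1) \<in> V" unfolding divide_inverse by (intro subr_mult[OF sV] subr_diff[OF sV] zV xV zi one)
  have E: "E_star x y z \<in> V4 V" using E_star_V4[OF sV xV c1 c2 c3 c4] .
  have "V \<subseteq> {w. algebraic w}"
  proof
    fix w assume "w \<in> V"
    have f: "finite G" unfolding G_def by (rule GG_finite)
    have m: "g * h \<in> Q.span G" if "g \<in> G" "h \<in> G" for g h
      using subr_mult[OF sV, unfolded V_def, OF Q.span_base[OF that(1)] Q.span_base[OF that(2)]] .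
    have o: "1 \<in> G" unfolding G_def using GG_mono[OF A, of 0 0 0] by simp
    have "algebraic w" using algebraic_of_span[OF f m o] \<open>w \<in> V\<close> unfolding V_def by blast
    then show "w \<in> {w. algebraic w}" by simp
  qed
  then show ?thesis using V4_alg[OF E] by blast
qed



definition kS :: "complex \<Rightarrow> complex poly poly" where "kS r = [:[:r:]:]"
definition aS :: "complex poly poly" where "aS = [:[:0,1:]:]"
definition bS :: "complex poly poly" where "bS = [:0,1:]"
definition A1 :: "complex \<Rightarrow> complex \<Rightarrow> complex poly poly" where "A1 p q = kS p * aS + kS q * bS"
definition A2 :: "complex \<Rightarrow> complex poly poly" where "A2 x = kS x * aS * bS"

lemma ev_kS[simp]: "poly (kS r) [:1:] = [:r:]" by (simp add: kS_def)
lemma ev_aS[simp]: "poly aS [:1:] = [:0,1:]" by (simp add: aS_def)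
lemma ev_bS[simp]: "poly bS [:1:] = [:1:]" by (simp add: bS_def)

lemma deg_le1_eq: "degree (k::'a::zero poly) \<le> 1 \<Longrightarrow> k = [:coeff k 0, coeff k 1:]"
  by (rule poly_eqI) (auto simp: coeff_pCons coeff_eq_0 split: nat.split)

lemma univ_nonsq:
  fixes p q x :: complex
  assumes x: "x \<noteq> 0" and pq: "p * q \<noteq> x"
  shows "k^2 \<noteq> [:q, p:]^2 - 4 * [:0, x:]"
proof
  assume h: "k^2 = [:q, p:]^2 - 4 * [:0, x:]"
  have rhs: "[:q, p:]^2 - 4 * [:0, x:] = [:q^2, 2*p*q - 4*x, p^2:]"
    by (simp add: power2_eq_square algebra_simps numeral_poly)
  have dk: "degree k \<le> 1"
  proof (rule ccontr)
    assume "\<not> degree k \<le> 1"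
    then have "k \<noteq> 0" by auto
    then have "degree (k^2) = 2 * degree k" by (simp add: degree_power_eq)
    moreover have "degree ([:q^2, 2*p*q - 4*x, p^2:]) \<le> 2" by simp
    ultimately show False using h rhs \<open>\<not> degree k \<le> 1\<close> by auto
  qed
  define k0 where "k0 = coeff k 0"
  define k1 where "k1 = coeff k 1"
  have kk: "k = [:k0, k1:]" using deg_le1_eq[OF dk] k0_def k1_def by simp
  have "k^2 = [:k0^2, 2*k0*k1, k1^2:]" unfolding kk by (simp add: power2_eq_square algebra_simps numeral_poly)
  with h rhs have e: "[:k0^2, 2*k0*k1, k1^2:] = [:q^2, 2*p*q - 4*x, p^2:]" by simp
  then have e0: "k0^2 = q^2" and e1: "2*k0*k1 = 2*p*q - 4*x" and e2: "k1^2 = p^2" by simp_all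
  have "(2*k0*k1)^2 = 4 * k0^2 * k1^2" by (simp add: power2_eq_square)
  then have "(2*p*q - 4*x)^2 = 4 * q^2 * p^2" using e0 e1 e2 by simp
  then have "16 * x * (x - p*q) = 0" by (simp add: power2_eq_square algebra_simps)
  with x pq show False by simp
qed

lemma nonsq:
  fixes p q x :: complex
  assumes x: "x \<noteq> 0" and pq: "p * q \<noteq> x"
  shows "h^2 \<noteq> A1 p q ^2 - 4 * A2 x"
proof
  assume "h^2 = A1 p q ^2 - 4 * A2 x"
  then have "poly (h^2) [:1:] = poly (A1 p q ^2 - 4 * A2 x) [:1:]" by simp
  moreover have "poly (A1 p q ^2 - 4 * A2 x) [:1:] = [:q, p:]^2 - 4 * [:0, x:]"
    by (simp add: A1_def A2_def numeral_poly algebra_simps)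
  ultimately have "(poly h [:1:])^2 = [:q, p:]^2 - 4 * [:0, x:]" by simp
  with univ_nonsq[OF x pq] show False by blast
qed

lemma pc_add: "[:a + b:] = [:a:] + [:b:]" by simp
lemma pc_mult: "[:a * b:] = [:a:] * [:(b::'a::comm_semiring_1):]" by (simp add: mult.commute)
lemma pc_diff: "[:a - b:] = [:a:] - [:(b::'a::comm_ring):]" by simp
lemma pc_minus: "[:- a:] = - [:(a::'a::comm_ring):]" by simp
lemma pc_pow: "[:a ^ n:] = [:(a::'a::comm_semiring_1):] ^ n" by (induct n) (simp_all add: pc_mult)
lemma pc_num: "[:numeral n:] = (numeral n :: 'a::comm_semiring_1 poly)" by (simp add: numeral_poly)
lemma pc_one: "[:1:] = (1 :: 'a::comm_semiring_1 poly)" by (simp add: one_pCons)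
lemma pc3: "[:u0, u1, u2:] = [:u0:] + [:u1:] * [:0,1:] + [:(u2::'a::comm_semiring_1):] * [:0,1:]^2"
  by (simp add: power2_eq_square)

definition LR :: "complex \<Rightarrow> complex \<Rightarrow> complex \<Rightarrow> complex \<Rightarrow> complex poly poly poly" where
 "LR p q s x = [: (kS s)^2 * A2 x, -(kS x * kS s * A1 p q), (kS x)^2 :]"
definition MR :: "complex \<Rightarrow> complex \<Rightarrow> complex \<Rightarrow> complex \<Rightarrow> complex \<Rightarrow> complex poly poly poly" where
 "MR p q r s x = [: -(kS s * A1 p q * A2 x), kS x * (A1 p q^2 - 2*A2 x) + 2 * kS r * kS s * A2 x, -(kS r * kS x * A1 p q) :]"
definition NR :: "complex \<Rightarrow> complex \<Rightarrow> complex \<Rightarrow> complex \<Rightarrow> complex poly poly poly" where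
 "NR p q r x = [: A2 x^2, -(kS r * A1 p q * A2 x), (kS r)^2 * A2 x :]"
definition Sp :: "complex \<Rightarrow> complex \<Rightarrow> complex \<Rightarrow> complex \<Rightarrow> complex \<Rightarrow> complex poly poly poly" where
 "Sp p q r s x = [: -(kS s * A2 x), kS x * A1 p q, -(kS r * kS x) :]"

lemma discr_gen:
  fixes a1 a2 r s x c :: "'a::comm_ring_1"
  shows "(-(s*a1*a2) + (x*(a1^2 - 2*a2) + 2*r*s*a2)*c + (-(r*x*a1))*c^2)^2
     - 4 * (s^2*a2 + (-(x*s*a1))*c + x^2*c^2) * (a2^2 + (-(r*a1*a2))*c + (r^2*a2)*c^2)
     = (a1^2 - 4*a2) * (-(s*a2) + (x*a1)*c + (-(r*x))*c^2)^2"
  by (simp add: power2_eq_square algebra_simps)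

lemma discr: "MR p q r s x ^2 - 4 * LR p q s x * NR p q r x = [:A1 p q^2 - 4 * A2 x:] * Sp p q r s x ^2"
  unfolding LR_def MR_def NR_def Sp_def pc3
  apply (simp only: pc_add pc_mult pc_diff pc_minus pc_pow pc_num)
  by (rule discr_gen)

lemma kS_0[simp]: "kS r = 0 \<longleftrightarrow> r = 0" by (simp add: kS_def)
lemma kS_mult: "kS (a*b) = kS a * kS b" by (simp add: kS_def)
lemma kS_diff: "kS (a-b) = kS a - kS b" by (simp add: kS_def)
lemma kS_one: "kS 1 = 1" by (simp add: kS_def one_pCons)
lemma kS_unit: "r \<noteq> 0 \<Longrightarrow> kS r dvd 1"
  by (metis dvdI kS_mult kS_one right_inverse)
lemma aS_nz: "aS \<noteq> 0" by (simp add: aS_def)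
lemma bS_nz: "bS \<noteq> 0" by (simp add: bS_def)
lemma A2_nz: "x \<noteq> 0 \<Longrightarrow> A2 x \<noteq> 0" by (simp add: A2_def aS_nz bS_nz)
lemma A1_zero: "A1 p q = 0 \<Longrightarrow> p = 0 \<and> q = 0"
proof -
  assume "A1 p q = 0"
  then have "poly (A1 p q) [:1:] = 0" by simp
  then have "[:q, p:] = 0" by (simp add: A1_def algebra_simps)
  then show ?thesis by simp
qed
lemma A1sq_ne: assumes "x \<noteq> 0" shows "A1 p q ^2 - 2 * A2 x \<noteq> 0"
proof
  assume "A1 p q ^2 - 2 * A2 x = 0"
  then have "poly (A1 p q ^2 - 2 * A2 x) [:1:] = 0" by simp
  then have "[:q, p:]^2 - 2 * [:0,x:] = 0" by (simp add: A1_def A2_def numeral_poly algebra_simps)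
  moreover have "[:q, p:]^2 - 2 * [:0,x:] = [:q^2, 2*p*q - 2*x, p^2:]"
    by (simp add: power2_eq_square algebra_simps numeral_poly)
  ultimately have "q^2 = 0" "2*p*q - 2*x = 0" "p^2 = 0" by simp_all
  with assms show False by simp
qed

lemma LR_nz: "x \<noteq> 0 \<Longrightarrow> LR p q s x \<noteq> 0" by (simp add: LR_def)
lemma LR_deg: assumes "x \<noteq> 0" shows "degree (LR p q s x) = 2"
proof -
  have "(kS x)^2 \<noteq> 0" using assms by simp
  then show ?thesis unfolding LR_def by (simp del: power_eq_0_iff kS_0)
qed
lemma LR_lead: assumes "x \<noteq> 0" shows "lead_coeff (LR p q s x) = (kS x)^2"
  by (simp add: LR_deg[OF assms]) (simp add: LR_def numeral_2_eq_2)

lemma Sp_nz: assumes "x \<noteq> 0" "\<not>(p=0 \<and> q=0 \<and> r=0 \<and> s=0)" shows "Sp p q r s x \<noteq> 0"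
proof
  assume h: "Sp p q r s x = 0"
  then have "kS r * kS x = 0" "kS x * A1 p q = 0" "kS s * A2 x = 0" by (simp_all add: Sp_def)
  with assms A2_nz[of x] A1_zero[of p q] show False by auto
qed

lemma coeff3_2[simp]: "coeff [:a,b,c:] 2 = c" by (simp add: numeral_2_eq_2)

lemma mult_lin: "[:f0, f1:] * [:g0, g1:] = [:f0*g0, f0*g1 + f1*g0, f1*g1::'a::comm_ring_1:]"
  by (simp add: algebra_simps)

lemma caseA:
  assumes x: "x \<noteq> 0" and pq: "p*q \<noteq> x" and nz: "\<not>(p=0 \<and> q=0 \<and> r=0 \<and> s=0)"
    and E: "[:NR p q r x, MR p q r s x, LR p q s x:] = [:f0, f1:] * [:g0, g1:]"
  shows False
proof -
  from E have "[:NR p q r x, MR p q r s x, LR p q s x:] = [:f0*g0, f0*g1 + f1*g0, f1*g1:]"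
    by (simp only: mult_lin)
  then have N: "NR p q r x = f0*g0" and M: "MR p q r s x = f0*g1 + f1*g0" and L: "LR p q s x = f1*g1"
    by simp_all
  define T where "T = f0*g1 - f1*g0"
  have "T^2 = MR p q r s x ^2 - 4 * LR p q s x * NR p q r x"
    unfolding T_def N M L by (simp add: power2_eq_square algebra_simps)
  also have "\<dots> = [:A1 p q^2 - 4 * A2 x:] * Sp p q r s x ^2" by (rule discr)
  finally have T2: "T^2 = [:A1 p q^2 - 4 * A2 x:] * Sp p q r s x ^2" .
  then have "Sp p q r s x ^2 dvd T^2" by (metis dvd_triv_right)
  then have "Sp p q r s x dvd T" using pow_divides_pow_iff[of 2] by simp
  then obtain h where h: "T = Sp p q r s x * h" by (auto elim: dvdE)
  have spnz: "Sp p q r s x ^2 \<noteq> 0" using Sp_nz[OF x nz] by simp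
  from T2 h have "Sp p q r s x ^2 * h^2 = Sp p q r s x ^2 * [:A1 p q^2 - 4 * A2 x:]"
    by (simp add: power_mult_distrib mult.commute)
  then have "h^2 = [:A1 p q^2 - 4 * A2 x:]" using mult_left_cancel[OF spnz] by blast
  then have "poly (h^2) 0 = A1 p q^2 - 4 * A2 x" by simp
  then have "(poly h 0)^2 = A1 p q^2 - 4 * A2 x" by simp
  with nonsq[OF x pq] show False by blast
qed

lemma deg0_eq: "degree (k::'a::zero poly) = 0 \<Longrightarrow> k = [:coeff k 0:]"
  by (rule poly_eqI) (auto simp: coeff_pCons coeff_eq_0 split: nat.split)

lemma coeff_mult_const: "coeff (p * [:w:]) k = coeff p k * (w::'a::comm_semiring_1)"
  by (simp add: mult.commute)

lemma caseB:
  assumes x: "x \<noteq> 0" and pq: "p*q \<noteq> x" and rs: "r*s \<noteq> x"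
    and E: "[:NR p q r x, MR p q r s x, LR p q s x:] = [:\<phi>:] * g"
  shows "\<phi> dvd 1"
proof -
  have cE: "coeff [:NR p q r x, MR p q r s x, LR p q s x:] k = \<phi> * coeff g k" for k
    using E by simp
  define g0 where "g0 = coeff g 0"
  define g1 where "g1 = coeff g 1"
  define g2 where "g2 = coeff g 2"
  have L: "LR p q s x = \<phi> * g2" using cE[of 2] g2_def by simp
  have M: "MR p q r s x = \<phi> * g1" using cE[of 1] g1_def by simp
  have N: "NR p q r x = \<phi> * g0" using cE[of 0] g0_def by simp
  have phnz: "\<phi> \<noteq> 0" and g2nz: "g2 \<noteq> 0" using L LR_nz[OF x, of p q s] by auto
  have deg: "degree \<phi> + degree g2 = 2"
    using degree_mult_eq[OF phnz g2nz] L LR_deg[OF x, of p q s] by simp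
  have "lead_coeff \<phi> * lead_coeff g2 = (kS x)^2"
    using lead_coeff_mult[of \<phi> g2] L LR_lead[OF x, of p q s] by simp
  moreover have "(kS x)^2 dvd 1" using kS_unit[OF x] by (simp add: power2_eq_square is_unit_mult_iff)
  ultimately have lu: "lead_coeff \<phi> dvd 1" by (metis dvd_trans dvd_triv_left)
  consider "degree \<phi> = 0" | "degree \<phi> = 1" | "degree \<phi> = 2" using deg by arith
  then show ?thesis
  proof cases
    case 1
    then have "\<phi> = [:lead_coeff \<phi>:]" using deg0_eq[OF 1] by simp
    then show ?thesis using lu by (metis is_unit_const_poly_iff)
  next
    case 2
    define f0 where "f0 = coeff \<phi> 0"
    define f1 where "f1 = coeff \<phi> 1"
    have ph: "\<phi> = [:f0, f1:]" using deg_le1_eq[of \<phi>] 2 f0_def f1_def by simp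
    have "f1 dvd 1" using lu 2 f1_def by simp
    then obtain u where u: "1 = f1 * u" by (auto elim: dvdE)
    define \<psi> where "\<psi> = - (f0 * u)"
    have "poly \<phi> \<psi> = 0" unfolding ph \<psi>_def using u by (simp add: algebra_simps)
    then have "poly (NR p q r x) \<psi> = 0" using N by simp
    then have "A2 x * (A2 x - kS r * A1 p q * \<psi> + (kS r)^2 * \<psi>^2) = 0"
      unfolding NR_def by (simp add: algebra_simps power2_eq_square)
    then have rel: "A2 x - kS r * A1 p q * \<psi> + (kS r)^2 * \<psi>^2 = 0" using A2_nz[OF x] by simp
    have "(A1 p q - 2 * kS r * \<psi>)^2 = A1 p q^2 - 4 * A2 x + 4 * (A2 x - kS r * A1 p q * \<psi> + (kS r)^2 * \<psi>^2)"
      by (simp add: power2_eq_square algebra_simps)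
    with rel have "(A1 p q - 2 * kS r * \<psi>)^2 = A1 p q^2 - 4 * A2 x" by simp
    with nonsq[OF x pq] show ?thesis by blast
  next
    case 3
    have dg2: "degree g2 = 0" using deg 3 by simp
    have g2e: "g2 = [:coeff g2 0:]" using deg0_eq[OF dg2] .
    have "degree g1 = 0"
    proof (cases "g1 = 0")
      case False
      have "degree (MR p q r s x) \<le> 2" by (simp add: MR_def)
      then show ?thesis using degree_mult_eq[OF phnz False] M 3 by simp
    qed simp
    then have g1e: "g1 = [:coeff g1 0:]" using deg0_eq by blast
    define w1 where "w1 = coeff g1 0"
    define w2 where "w2 = coeff g2 0"
    have cL: "coeff (LR p q s x) k = coeff \<phi> k * w2" for k
      using L g2e w2_def coeff_mult_const by metis
    have cM: "coeff (MR p q r s x) k = coeff \<phi> k * w1" for k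
      using M g1e w1_def coeff_mult_const by metis
    have "coeff (LR p q s x) 2 * coeff (MR p q r s x) 1 = coeff (LR p q s x) 1 * coeff (MR p q r s x) 2"
      unfolding cL cM by (simp add: algebra_simps)
    then have "(kS x)^2 * (kS x * (A1 p q^2 - 2*A2 x) + 2 * kS r * kS s * A2 x)
        = (-(kS x * kS s * A1 p q)) * (-(kS r * kS x * A1 p q))"
      by (simp add: LR_def MR_def)
    then have "(kS x)^2 * ((kS x - kS r * kS s) * (A1 p q^2 - 2*A2 x)) = 0"
      by (simp add: algebra_simps power2_eq_square)
    moreover have "kS x - kS r * kS s \<noteq> 0" using rs by (metis kS_0 kS_diff kS_mult right_minus_eq)
    ultimately have "A1 p q^2 - 2*A2 x = 0" using x by simp
    with A1sq_ne[OF x] show ?thesis by blast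
  qed
qed

lemma const4_kS: "const4 r = [:[:kS r:]:]" by (simp add: const4_def kS_def)
lemma var_a_aS: "var_a = [:[:aS:]:]" by (simp add: var_a_def aS_def)
lemma var_b_bS: "var_b = [:[:bS:]:]" by (simp add: var_b_def bS_def)



lemma E_star_eq:
  assumes "p = (y - x) / (y - 1)" "q = (x * y - 1) / (y - 1)" "r = (z - x) / (z - 1)" "s = (x * z - 1) / (z - 1)"
  shows "E_star x y z = [:NR p q r x, MR p q r s x, LR p q s x:]"
  unfolding E_star_def E_poly_def const4_kS var_a_aS var_b_bS var_c_def var_d_def NR_def MR_def LR_def
    A1_def A2_def pc3 assms[symmetric]
  apply (simp only: pc_add pc_mult pc_diff pc_minus pc_pow pc_num)
  by algebra

lemma irr_core:
  assumes x: "x \<noteq> 0" and pq: "p*q \<noteq> x" and rs: "r*s \<noteq> x" and nz: "\<not>(p=0 \<and> q=0 \<and> r=0 \<and> s=0)"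
    and E: "[:NR p q r x, MR p q r s x, LR p q s x:] = f * g"
  shows "f dvd 1 \<or> g dvd 1"
proof -
  let ?E = "[:NR p q r x, MR p q r s x, LR p q s x:]"
  have Enz: "?E \<noteq> 0" using LR_nz[OF x, of p q s] by simp
  have dE: "degree ?E = 2" using LR_nz[OF x, of p q s] by simp
  have fnz: "f \<noteq> 0" and gnz: "g \<noteq> 0" using Enz E by auto
  have deg: "degree f + degree g = 2" using degree_mult_eq[OF fnz gnz] E dE by simp
  consider "degree f = 0" | "degree g = 0" | "degree f = 1" "degree g = 1" using deg by arith
  then show ?thesis
  proof cases
    case 1
    have "f = [:coeff f 0:]" using deg0_eq[OF 1] .
    then have "?E = [:coeff f 0:] * g" using E by simp
    then have "coeff f 0 dvd 1" using caseB[OF x pq rs] by blast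
    then show ?thesis using \<open>f = [:coeff f 0:]\<close> by (metis is_unit_const_poly_iff)
  next
    case 2
    have "g = [:coeff g 0:]" using deg0_eq[OF 2] .
    then have "?E = [:coeff g 0:] * f" using E by (simp add: mult.commute)
    then have "coeff g 0 dvd 1" using caseB[OF x pq rs] by blast
    then show ?thesis using \<open>g = [:coeff g 0:]\<close> by (metis is_unit_const_poly_iff)
  next
    case 3
    have "f = [:coeff f 0, coeff f 1:]" by (rule deg_le1_eq) (simp add: 3)
    moreover have "g = [:coeff g 0, coeff g 1:]" by (rule deg_le1_eq) (simp add: 3)
    ultimately have "?E = [:coeff f 0, coeff f 1:] * [:coeff g 0, coeff g 1:]" using E by simp
    with caseA[OF x pq nz] show ?thesis by blast
  qed
qed

lemma coeff_const4: "coeff (coeff (coeff (coeff (const4 r) i) j) k) l = (if i = 0 \<and> j = 0 \<and> k = 0 \<and> l = 0 then r else 0)"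
  by (simp add: const4_def coeff_pCons split: nat.split)

lemma unit_alg:
  assumes a: "alg_coeffs4 f" and u: "f dvd 1"
  shows "unit_Qbar4 f"
proof -
  obtain c1 where c1: "f = [:c1:]" "c1 dvd 1" using u is_unit_poly_iff by blast
  obtain c2 where c2: "c1 = [:c2:]" "c2 dvd 1" using c1(2) is_unit_poly_iff by blast
  obtain c3 where c3: "c2 = [:c3:]" "c3 dvd 1" using c2(2) is_unit_poly_iff by blast
  obtain c4 where c4: "c3 = [:c4:]" "c4 dvd 1" using c3(2) is_unit_poly_iff by blast
  have fc: "f = const4 c4" using c1 c2 c3 c4 by (simp add: const4_def)
  have nz: "c4 \<noteq> 0" using c4(2) by auto
  have "algebraic c4" using a fc coeff_const4[of c4 0 0 0 0] unfolding alg_coeffs4_def by metis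
  then have ai: "algebraic (inverse c4)" by blast
  have "alg_coeffs4 (const4 (inverse c4))"
    unfolding alg_coeffs4_def coeff_const4 using ai by auto
  moreover have "f * const4 (inverse c4) = 1"
    using nz by (simp add: fc const4_def one_pCons)
  ultimately show ?thesis unfolding unit_Qbar4_def by blast
qed

lemma rou_nz: "root_of_unity x \<Longrightarrow> x \<noteq> 0"
  unfolding root_of_unity_def by (metis power_0_left not_gr0 zero_neq_one)

lemma pq_ne: fixes x y :: complex assumes "x \<noteq> 1" "y \<noteq> 1" "y \<noteq> 0"
  shows "((y - x) / (y - 1)) * ((x * y - 1) / (y - 1)) \<noteq> x"
proof
  assume h: "((y - x) / (y - 1)) * ((x * y - 1) / (y - 1)) = x"
  have y1: "y - 1 \<noteq> 0" using assms by simp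
  have "(y - x) / (y - 1) * ((x * y - 1) / (y - 1)) = (y - x) * (x * y - 1) / (y - 1)^2"
    by (simp add: power2_eq_square)
  with h have "(y - x) * (x * y - 1) / (y - 1)^2 = x" by simp
  then have "(y - x) * (x * y - 1) = x * (y - 1)^2" using y1 by (simp add: divide_eq_eq del: power2_eq_square)
  moreover have "y * (x - 1)^2 = x * (y-1)^2 - (y - x) * (x * y - 1)" by (simp add: algebra_simps power2_eq_square)
  ultimately have "y * (x - 1)^2 = 0" by simp
  with assms show False by simp
qed

lemma nz_cond: fixes x y z :: complex assumes "x \<noteq> 1" "y \<noteq> 1" "z \<noteq> 1" "\<not> (x = -1 \<and> y = -1 \<and> z = -1)"
  shows "\<not> ((y - x) / (y - 1) = 0 \<and> (x * y - 1) / (y - 1) = 0 \<and> (z - x) / (z - 1) = 0 \<and> (x * z - 1) / (z - 1) = 0)"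
proof
  assume h: "(y - x) / (y - 1) = 0 \<and> (x * y - 1) / (y - 1) = 0 \<and> (z - x) / (z - 1) = 0 \<and> (x * z - 1) / (z - 1) = 0"
  have "y - 1 \<noteq> 0" "z - 1 \<noteq> 0" using assms by auto
  with h have "y = x" "x * y = 1" "z = x" by auto
  then have "(x - 1) * (x + 1) = 0" by (simp add: algebra_simps power2_eq_square)
  then have "x + 1 = 0" using assms by simp
  then have "x = -1" by (simp add: eq_neg_iff_add_eq_0)
  with \<open>y = x\<close> \<open>z = x\<close> assms show False by simp
qed

theorem theoremA2:
  fixes x y z :: complex
  assumes "root_of_unity x" and "root_of_unity y" and "root_of_unity z"
    and "x \<noteq> 1" and "y \<noteq> 1" and "z \<noteq> 1"
    and "\<not> (x = -1 \<and> y = -1 \<and> z = -1)"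
  shows "irreducible_Qbar4 (E_star x y z)"
proof -
  define p where "p = (y - x) / (y - 1)"
  define q where "q = (x * y - 1) / (y - 1)"
  define r where "r = (z - x) / (z - 1)"
  define s where "s = (x * z - 1) / (z - 1)"
  have x0: "x \<noteq> 0" using rou_nz assms(1) .
  have pq: "p * q \<noteq> x" unfolding p_def q_def using pq_ne assms rou_nz by blast
  have rs: "r * s \<noteq> x" unfolding r_def s_def using pq_ne assms rou_nz by blast
  have nz: "\<not>(p=0 \<and> q=0 \<and> r=0 \<and> s=0)" unfolding p_def q_def r_def s_def using nz_cond assms by blast
  have Eeq: "E_star x y z = [:NR p q r x, MR p q r s x, LR p q s x:]"
    using E_star_eq p_def q_def r_def s_def by blast
  have alg: "alg_coeffs4 (E_star x y z)" using alg_E assms by blast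
  have Enz: "E_star x y z \<noteq> 0" unfolding Eeq using LR_nz[OF x0, of p q s] by simp
  have dE: "degree (E_star x y z) = 2" unfolding Eeq using LR_nz[OF x0, of p q s] by simp
  have nu: "\<not> unit_Qbar4 (E_star x y z)"
  proof
    assume "unit_Qbar4 (E_star x y z)"
    then obtain h where "E_star x y z * h = 1" unfolding unit_Qbar4_def by blast
    then have "E_star x y z dvd 1" by (metis dvdI)
    then obtain c where "E_star x y z = [:c:]" using is_unit_poly_iff by blast
    with dE show False by simp
  qed
  show ?thesis
    unfolding irreducible_Qbar4_def
  proof (intro conjI alg Enz nu allI impI)
    fix f g assume h: "alg_coeffs4 f \<and> alg_coeffs4 g \<and> E_star x y z = f * g"
    then have "f dvd 1 \<or> g dvd 1" using irr_core[OF x0 pq rs nz] Eeq by metis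
    then show "unit_Qbar4 f \<or> unit_Qbar4 g" using h unit_alg by blast
  qed
qed

end
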